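(* There exist class $\mathcal{K}_\infty$ functions $\alpha_1,\alpha_2$ such that: $V(x)\ge\alpha_1(|x|)$ for all $x\in\mathbb{X}$; $V(x)\le\alpha_2(|x|)$ for all $x\in\mathbb{X}_f$; $V(f(x,\kappa(x)))\le V(x)-\alpha_1(|x|)$ for all $x\in\mathbb{X}$.
   Context: Consider the discrete-time controlled system $x^+=f(x,u)$ with state $x\in\mathbb{R}^{n}$ and control $u\in\mathbb{R}^{m}$, constraint sets $\mathbb{X}\subset\mathbb{R}^n$, $\mathbb{U}\subset\mathbb{R}^m$, $\mathbb{Y}\subset\mathbb{R}^p$, and a constraint function $h(x,u)\in\mathbb{R}^p$. A control $u$ is feasible at $x\in\mathbb{X}$ if $u\in\mathbb{U}$, $f(x,u)\in\mathbb{X}$ and $h(x,u)\in\mathbb{Y}$. A control sequence $(u(0),\ldots,u(N-1))$ is feasible from $x$ if, for the state sequence defined by $x(0)=x$ and $x(k+1)=f(x(k),u(k))$, each $u(k)$ is feasible at $x(k)$. We are given a stage cost $l(x,u)$, a terminal set $\mathbb{X}_f$ and a terminal cost $V_f$ defined on $\mathbb{X}_f$. Horizon-$N$ problem at $x$: minimize $\sum_{k=0}^{N-1}l(x(k),u(k))+V_f(x(N))$ over control sequences that are feasible from $x$ and satisfy $x(N)\in\mathbb{X}_f$. Let $V_N^0(x)$ be its minimum value, which is assumed to be attained whenever the feasible set is nonempty. Let $(u^0_N(0),\ldots,u^0_N(N-1))$ be a minimizer, and set $\kappa_N(x)=u_N^0(0)$. For $N=0$, $V_0^0(x)=V_f(x)$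 for $x\in\mathbb{X}_f$. Standing assumptions: (A1) $f,l,h,V_f$ are continuous on an open set containing $\mathbb{X}\times\mathbb{U}$ (for $V_f$, an open set containing $\mathbb{X}_f$). The stage cost $l$ is nonnegative definite in $(x,u)$ and positive definite in $u$. $V_f$ is positive definite on $\mathbb{X}_f$. Moreover $f(0,0)=0$, $l(0,0)=0$ and $V_f(0)=0$. (A2) $\mathbb{X}$ and $\mathbb{X}_f$ are closed, $\mathbb{X}_f\subset\mathbb{X}$, $\mathbb{U}$ is compact, and $\mathbb{X},\mathbb{X}_f,\mathbb{U}$ each contain a neighborhood of the origin. (A3) For every $x\in\mathbb{X}_f$ there is a control $u$ feasible at $x$ with $f(x,u)\in\mathbb{X}_f$ and $l(x,u)+V_f(f(x,u))\le V_f(x)$. (A4) For every $x\in\mathbb{X}$ there exist an integer $N\ge0$ and a feasible control sequence of length $N$ from $x$ whose state sequence satisfies $x(N)\in\mathbb{X}_f$. For $x\in\mathbb{X}$, $N(x)$ denotes the minimum such $N$. (A5) There is an integer $M\ge 0$ with $N(x)\le M$ for all $x\in\mathbb{X}$. (A6) There are class $\mathcal{K}_\infty$ functions $\alpha_1,\alpha_2$ with $l(x,u)\ge\alpha_1(|x|)$ for all $x\in\mathbb{X}$, $u\in\mathbb{U}$, and $V_f(x)\le\alpha_2(|x|)$ for all $x\in\mathbb{X}_f$. Define $V(x)=V^0_{N(x)}(x)$ for $x\in\mathbb{X}$. For $N(x)\ge1$ set $\kappa(x)=\kappa_{N(x)}(x)$. For $N(x)=0$ (equivalently $x\in\mathbb{X}_f$),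 let $\kappa(x)$ be a feasible control $u$ as in (A3). *)

theory Defs
  imports "HOL-Analysis.Analysis"
begin

definition Kinf :: "(real \<Rightarrow> real) \<Rightarrow> bool" where
  "Kinf \<alpha> \<longleftrightarrow> continuous_on {0..} \<alpha> \<and> \<alpha> 0 = 0 \<and> strict_mono_on {0..} \<alpha>
      \<and> filterlim \<alpha> at_top at_top"

definition feasible_ctrl ::
  "('a \<Rightarrow> 'b \<Rightarrow> 'a) \<Rightarrow> ('a \<Rightarrow> 'b \<Rightarrow> 'c) \<Rightarrow> 'a set \<Rightarrow> 'b set \<Rightarrow> 'c set \<Rightarrow> 'a \<Rightarrow> 'b \<Rightarrow> bool" where
  "feasible_ctrl f h X U Y x u \<longleftrightarrow> x \<in> X \<and> u \<in> U \<and> f x u \<in> X \<and> h x u \<in> Y"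

fun traj :: "('a \<Rightarrow> 'b \<Rightarrow> 'a) \<Rightarrow> 'a \<Rightarrow> (nat \<Rightarrow> 'b) \<Rightarrow> nat \<Rightarrow> 'a" where
  "traj f x us 0 = x"
| "traj f x us (Suc k) = f (traj f x us k) (us k)"

text \<open>Control sequence (only the first N entries matter) feasible from x.\<close>
definition feasible_seq ::
  "('a \<Rightarrow> 'b \<Rightarrow> 'a) \<Rightarrow> ('a \<Rightarrow> 'b \<Rightarrow> 'c) \<Rightarrow> 'a set \<Rightarrow> 'b set \<Rightarrow> 'c set \<Rightarrow> nat \<Rightarrow> 'a \<Rightarrow> (nat \<Rightarrow> 'b) \<Rightarrow> bool" where
  "feasible_seq f h X U Y N x us \<longleftrightarrow>
     (\<forall>k<N. feasible_ctrl f h X U Y (traj f x us k) (us k))"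

definition admissible ::
  "('a \<Rightarrow> 'b \<Rightarrow> 'a) \<Rightarrow> ('a \<Rightarrow> 'b \<Rightarrow> 'c) \<Rightarrow> 'a set \<Rightarrow> 'b set \<Rightarrow> 'c set \<Rightarrow> 'a set
     \<Rightarrow> nat \<Rightarrow> 'a \<Rightarrow> (nat \<Rightarrow> 'b) \<Rightarrow> bool" where
  "admissible f h X U Y Xf N x us \<longleftrightarrow>
     x \<in> X \<and> feasible_seq f h X U Y N x us \<and> traj f x us N \<in> Xf"

definition cost ::
  "('a \<Rightarrow> 'b \<Rightarrow> 'a) \<Rightarrow> ('a \<Rightarrow> 'b \<Rightarrow> real) \<Rightarrow> ('a \<Rightarrow> real) \<Rightarrow> nat \<Rightarrow> 'a \<Rightarrow> (nat \<Rightarrow> 'b) \<Rightarrow> real" where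
  "cost f l Vf N x us = (\<Sum>k<N. l (traj f x us k) (us k)) + Vf (traj f x us N)"

definition VN ::
  "('a \<Rightarrow> 'b \<Rightarrow> 'a) \<Rightarrow> ('a \<Rightarrow> 'b \<Rightarrow> 'c) \<Rightarrow> ('a \<Rightarrow> 'b \<Rightarrow> real) \<Rightarrow> ('a \<Rightarrow> real)
     \<Rightarrow> 'a set \<Rightarrow> 'b set \<Rightarrow> 'c set \<Rightarrow> 'a set \<Rightarrow> nat \<Rightarrow> 'a \<Rightarrow> real" where
  "VN f h l Vf X U Y Xf N x = Inf (cost f l Vf N x ` {us. admissible f h X U Y Xf N x us})"

definition is_opt ::
  "('a \<Rightarrow> 'b \<Rightarrow> 'a) \<Rightarrow> ('a \<Rightarrow> 'b \<Rightarrow> 'c) \<Rightarrow> ('a \<Rightarrow> 'b \<Rightarrow> real) \<Rightarrow> ('a \<Rightarrow> real)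
     \<Rightarrow> 'a set \<Rightarrow> 'b set \<Rightarrow> 'c set \<Rightarrow> 'a set \<Rightarrow> nat \<Rightarrow> 'a \<Rightarrow> (nat \<Rightarrow> 'b) \<Rightarrow> bool" where
  "is_opt f h l Vf X U Y Xf N x us \<longleftrightarrow> admissible f h X U Y Xf N x us \<and>
     (\<forall>vs. admissible f h X U Y Xf N x vs \<longrightarrow> cost f l Vf N x us \<le> cost f l Vf N x vs)"

definition Nmin ::
  "('a \<Rightarrow> 'b \<Rightarrow> 'a) \<Rightarrow> ('a \<Rightarrow> 'b \<Rightarrow> 'c) \<Rightarrow> 'a set \<Rightarrow> 'b set \<Rightarrow> 'c set \<Rightarrow> 'a set \<Rightarrow> 'a \<Rightarrow> nat" where
  "Nmin f h X U Y Xf x = (LEAST N. \<exists>us. admissible f h X U Y Xf N x us)"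

definition Vfun ::
  "('a \<Rightarrow> 'b \<Rightarrow> 'a) \<Rightarrow> ('a \<Rightarrow> 'b \<Rightarrow> 'c) \<Rightarrow> ('a \<Rightarrow> 'b \<Rightarrow> real) \<Rightarrow> ('a \<Rightarrow> real)
     \<Rightarrow> 'a set \<Rightarrow> 'b set \<Rightarrow> 'c set \<Rightarrow> 'a set \<Rightarrow> 'a \<Rightarrow> real" where
  "Vfun f h l Vf X U Y Xf x = VN f h l Vf X U Y Xf (Nmin f h X U Y Xf x) x"

end

theory Submission
  imports Defs
begin

lemma traj_shift:
  "traj f x us (Suc k) = traj f (f x (us 0)) (\<lambda>k. us (Suc k)) k"
  by (induction k) auto

lemma traj_cons:
  "traj f x (case_nat u vs) (Suc k) = traj f (f x u) vs k"
  by (induction k) auto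

lemma adm_shift:
  assumes "admissible f h X U Y Xf (Suc N) x us"
  shows "admissible f h X U Y Xf N (f x (us 0)) (\<lambda>k. us (Suc k))
     \<and> feasible_ctrl f h X U Y x (us 0)"
proof -
  have fs: "\<forall>k<Suc N. feasible_ctrl f h X U Y (traj f x us k) (us k)"
    using assms unfolding admissible_def feasible_seq_def by blast
  have fc: "feasible_ctrl f h X U Y x (us 0)" using fs[rule_format, of 0] by simp
  show ?thesis unfolding admissible_def feasible_seq_def
  proof (intro conjI allI impI)
    show "f x (us 0) \<in> X" using fc unfolding feasible_ctrl_def by blast
    fix k assume "k < N"
    then show "feasible_ctrl f h X U Y (traj f (f x (us 0)) (\<lambda>k. us (Suc k)) k) (us (Suc k))"
      using fs[rule_format, of "Suc k"] traj_shift[of f x us k] by simp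
  next
    show "traj f (f x (us 0)) (\<lambda>k. us (Suc k)) N \<in> Xf"
      using assms traj_shift[of f x us N] unfolding admissible_def by simp
  qed (rule fc)
qed

lemma adm_cons:
  assumes "feasible_ctrl f h X U Y x u" "admissible f h X U Y Xf N (f x u) vs"
  shows "admissible f h X U Y Xf (Suc N) x (case_nat u vs)"
  unfolding admissible_def feasible_seq_def
proof (intro conjI allI impI)
  show "x \<in> X" using assms(1) unfolding feasible_ctrl_def by blast
  fix k assume k: "k < Suc N"
  show "feasible_ctrl f h X U Y (traj f x (case_nat u vs) k) (case_nat u vs k)"
  proof (cases k)
    case 0 then show ?thesis using assms(1) by simp
  next
    case (Suc j) then show ?thesis using k assms(2) traj_cons[of f x u vs j]
      unfolding admissible_def feasible_seq_def by simp
  qed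
next
  show "traj f x (case_nat u vs) (Suc N) \<in> Xf"
    using assms(2) traj_cons[of f x u vs N] unfolding admissible_def by simp
qed

lemma cost_shift:
  "cost f l Vf (Suc N) x us = l x (us 0) + cost f l Vf N (f x (us 0)) (\<lambda>k. us (Suc k))"
proof -
  have "(\<Sum>k<Suc N. l (traj f x us k) (us k)) = l x (us 0) + (\<Sum>k<N. l (traj f x us (Suc k)) (us (Suc k)))"
    by (subst sum.lessThan_Suc_shift) simp
  then show ?thesis unfolding cost_def using traj_shift[of f x us] by simp
qed

lemma cost_nonneg:
  assumes "admissible f h X U Y Xf N x us"
    "\<forall>x\<in>X. \<forall>u\<in>U. l x u \<ge> 0" "\<forall>x\<in>Xf. Vf x \<ge> 0 \<and> (x \<noteq> 0 \<longrightarrow> Vf x > 0)"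
  shows "cost f l Vf N x us \<ge> 0"
proof -
  have "\<forall>k<N. l (traj f x us k) (us k) \<ge> 0"
    using assms unfolding admissible_def feasible_seq_def feasible_ctrl_def by blast
  then have "(\<Sum>k<N. l (traj f x us k) (us k)) \<ge> 0" by (intro sum_nonneg) auto
  moreover have "Vf (traj f x us N) \<ge> 0" using assms unfolding admissible_def by blast
  ultimately show ?thesis unfolding cost_def by simp
qed

lemma VN_le:
  assumes "admissible f h X U Y Xf N x us"
    "\<forall>x\<in>X. \<forall>u\<in>U. l x u \<ge> 0" "\<forall>x\<in>Xf. Vf x \<ge> 0 \<and> (x \<noteq> 0 \<longrightarrow> Vf x > 0)"
  shows "VN f h l Vf X U Y Xf N x \<le> cost f l Vf N x us"
  unfolding VN_def
  apply (rule cInf_lower)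
  using assms(1) apply blast
  unfolding bdd_below_def using cost_nonneg[OF _ assms(2,3)] by blast

lemma VN_opt:
  assumes "is_opt f h l Vf X U Y Xf N x us"
  shows "VN f h l Vf X U Y Xf N x = cost f l Vf N x us"
  unfolding VN_def
  apply (rule cInf_eq_minimum)
  using assms unfolding is_opt_def by auto

lemma VN_nonneg:
  assumes "admissible f h X U Y Xf N x us"
    "\<forall>x\<in>X. \<forall>u\<in>U. l x u \<ge> 0" "\<forall>x\<in>Xf. Vf x \<ge> 0 \<and> (x \<noteq> 0 \<longrightarrow> Vf x > 0)"
  shows "VN f h l Vf X U Y Xf N x \<ge> 0"
  unfolding VN_def
  apply (rule cInf_greatest)
  using assms(1) apply blast
  using cost_nonneg[OF _ assms(2,3)] by blast

lemma VN_0: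
  assumes "x \<in> Xf" "Xf \<subseteq> X"
  shows "VN f h l Vf X U Y Xf 0 x = Vf x"
proof -
  have "cost f l Vf 0 x ` {us. admissible f h X U Y Xf 0 x us} = {Vf x}"
    using assms unfolding cost_def admissible_def feasible_seq_def by auto
  then show ?thesis unfolding VN_def by simp
qed

lemma Nmin_0:
  assumes "x \<in> Xf" "Xf \<subseteq> X"
  shows "Nmin f h X U Y Xf x = 0"
proof -
  have "admissible f h X U Y Xf 0 x us" for us
    using assms unfolding admissible_def feasible_seq_def by auto
  then show ?thesis unfolding Nmin_def by (metis (mono_tags) Least_eq_0)
qed


theorem proposition1:
  fixes f :: "'a::euclidean_space \<Rightarrow> 'b::euclidean_space \<Rightarrow> 'a"
    and h :: "'a \<Rightarrow> 'b \<Rightarrow> 'c::euclidean_space"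
    and l :: "'a \<Rightarrow> 'b \<Rightarrow> real"
    and Vf :: "'a \<Rightarrow> real"
    and X Xf :: "'a set" and U :: "'b set" and Y :: "'c set"
    and \<kappa> :: "'a \<Rightarrow> 'b"
  assumes A1_f: "\<exists>W. open W \<and> X \<times> U \<subseteq> W \<and> continuous_on W (\<lambda>(x, u). f x u)"
    and A1_l: "\<exists>W. open W \<and> X \<times> U \<subseteq> W \<and> continuous_on W (\<lambda>(x, u). l x u)"
    and A1_h: "\<exists>W. open W \<and> X \<times> U \<subseteq> W \<and> continuous_on W (\<lambda>(x, u). h x u)"
    and A1_Vf: "\<exists>W. open W \<and> Xf \<subseteq> W \<and> continuous_on W Vf"
    and A1_l_nonneg: "\<forall>x\<in>X. \<forall>u\<in>U. l x u \<ge> 0"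
    and A1_l_posdef_u: "\<forall>x\<in>X. \<forall>u\<in>U. u \<noteq> 0 \<longrightarrow> l x u > 0"
    and A1_Vf_posdef: "\<forall>x\<in>Xf. Vf x \<ge> 0 \<and> (x \<noteq> 0 \<longrightarrow> Vf x > 0)"
    and A1_zero: "f 0 0 = 0" "l 0 0 = 0" "Vf 0 = 0"
    and A2: "closed X" "closed Xf" "Xf \<subseteq> X" "compact U"
      "0 \<in> interior X" "0 \<in> interior Xf" "0 \<in> interior U"
    and A3: "\<forall>x\<in>Xf. \<exists>u. feasible_ctrl f h X U Y x u \<and> f x u \<in> Xf
               \<and> l x u + Vf (f x u) \<le> Vf x"
    and A4: "\<forall>x\<in>X. \<exists>N us. admissible f h X U Y Xf N x us"
    and A5: "\<exists>M. \<forall>x\<in>X. Nmin f h X U Y Xf x \<le> M"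
    and A6: "\<exists>\<alpha>1 \<alpha>2. Kinf \<alpha>1 \<and> Kinf \<alpha>2 \<and> (\<forall>x\<in>X. \<forall>u\<in>U. l x u \<ge> \<alpha>1 (norm x))
               \<and> (\<forall>x\<in>Xf. Vf x \<le> \<alpha>2 (norm x))"
    and attained: "\<forall>N x. (\<exists>us. admissible f h X U Y Xf N x us)
               \<longrightarrow> (\<exists>us. is_opt f h l Vf X U Y Xf N x us)"
    and kappa_opt: "\<forall>x\<in>X. Nmin f h X U Y Xf x \<ge> 1 \<longrightarrow>
               (\<exists>us. is_opt f h l Vf X U Y Xf (Nmin f h X U Y Xf x) x us \<and> \<kappa> x = us 0)"
    and kappa_term: "\<forall>x\<in>X. Nmin f h X U Y Xf x = 0 \<longrightarrow>
               feasible_ctrl f h X U Y x (\<kappa> x) \<and> f x (\<kappa> x) \<in> Xf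
               \<and> l x (\<kappa> x) + Vf (f x (\<kappa> x)) \<le> Vf x"
  shows "\<exists>\<alpha>1 \<alpha>2. Kinf \<alpha>1 \<and> Kinf \<alpha>2
     \<and> (\<forall>x\<in>X. Vfun f h l Vf X U Y Xf x \<ge> \<alpha>1 (norm x))
     \<and> (\<forall>x\<in>Xf. Vfun f h l Vf X U Y Xf x \<le> \<alpha>2 (norm x))
     \<and> (\<forall>x\<in>X. Vfun f h l Vf X U Y Xf (f x (\<kappa> x))
                 \<le> Vfun f h l Vf X U Y Xf x - \<alpha>1 (norm x))"
proof -
  obtain \<alpha>1 \<alpha>2 where K1: "Kinf \<alpha>1" and K2: "Kinf \<alpha>2"
    and la: "\<forall>x\<in>X. \<forall>u\<in>U. l x u \<ge> \<alpha>1 (norm x)" and va: "\<forall>x\<in>Xf. Vf x \<le> \<alpha>2 (norm x)"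
    using A6 by blast
  let ?N = "Nmin f h X U Y Xf"
  let ?V = "Vfun f h l Vf X U Y Xf"
  have NminI: "\<exists>us. admissible f h X U Y Xf (?N x) x us" if "x \<in> X" for x
  proof -
    have "\<exists>N. \<exists>us. admissible f h X U Y Xf N x us" using A4 that by blast
    then show ?thesis unfolding Nmin_def by (rule LeastI_ex)
  qed
  have Nmin_le: "?N x \<le> n" if "admissible f h X U Y Xf n x us" for x n us
    unfolding Nmin_def using that by (metis (mono_tags, lifting) Least_le)
  have Vnn: "?V x \<ge> 0" if "x \<in> X" for x
    using NminI[OF that] VN_nonneg[OF _ A1_l_nonneg A1_Vf_posdef] unfolding Vfun_def by blast
  have dec: "f x (\<kappa> x) \<in> X \<and> ?V (f x (\<kappa> x)) \<le> ?V x - \<alpha>1 (norm x)" if x: "x \<in> X" for x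
  proof (cases "?N x")
    case 0
    obtain us where "admissible f h X U Y Xf 0 x us" using NminI[OF x] 0 by auto
    then have xf: "x \<in> Xf" unfolding admissible_def by simp
    have kt: "feasible_ctrl f h X U Y x (\<kappa> x) \<and> f x (\<kappa> x) \<in> Xf
               \<and> l x (\<kappa> x) + Vf (f x (\<kappa> x)) \<le> Vf x" using kappa_term x 0 by blast
    have "\<kappa> x \<in> U" using kt unfolding feasible_ctrl_def by blast
    then have "l x (\<kappa> x) \<ge> \<alpha>1 (norm x)" using la x by blast
    moreover have "?V x = Vf x" unfolding Vfun_def using 0 VN_0[OF xf A2(3)] by simp
    moreover have "?V (f x (\<kappa> x)) = Vf (f x (\<kappa> x))"
      unfolding Vfun_def using kt Nmin_0[OF _ A2(3), of "f x (\<kappa> x)" f h U Y] VN_0[OF _ A2(3), of "f x (\<kappa> x)" f h l Vf U Y] by simp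
    ultimately show ?thesis using kt A2(3) by auto
  next
    case (Suc m)
    obtain us where opt: "is_opt f h l Vf X U Y Xf (?N x) x us" and k: "\<kappa> x = us 0"
      using kappa_opt x Suc by auto
    have adm: "admissible f h X U Y Xf (Suc m) x us" using opt Suc unfolding is_opt_def by simp
    note sh = adm_shift[OF adm]
    let ?x = "f x (us 0)"
    have xX: "?x \<in> X" using sh unfolding feasible_ctrl_def by blast
    have "?N ?x = m"
    proof -
      have le: "?N ?x \<le> m" using Nmin_le sh by blast
      obtain vs where "admissible f h X U Y Xf (?N ?x) ?x vs" using NminI[OF xX] by blast
      from adm_cons[OF _ this] sh have "admissible f h X U Y Xf (Suc (?N ?x)) x (case_nat (us 0) vs)"
        by blast
      then have "?N x \<le> Suc (?N ?x)" using Nmin_le by blast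
      then show ?thesis using le Suc by simp
    qed
    then have "?V ?x \<le> cost f l Vf m ?x (\<lambda>k. us (Suc k))"
      unfolding Vfun_def using VN_le[OF conjunct1[OF sh] A1_l_nonneg A1_Vf_posdef] by simp
    moreover have "?V x = l x (us 0) + cost f l Vf m ?x (\<lambda>k. us (Suc k))"
      unfolding Vfun_def using VN_opt[OF opt] Suc cost_shift by simp
    moreover have "us 0 \<in> U" using sh unfolding feasible_ctrl_def by blast
    then have "l x (us 0) \<ge> \<alpha>1 (norm x)" using la x by blast
    ultimately show ?thesis using k xX by simp
  qed
  show ?thesis
  proof (intro exI conjI ballI)
    show "Kinf \<alpha>1" "Kinf \<alpha>2" by (fact K1, fact K2)
    fix x assume x: "x \<in> X"
    show "?V x \<ge> \<alpha>1 (norm x)" using dec[OF x] Vnn[of "f x (\<kappa> x)"] by simp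
    show "?V (f x (\<kappa> x)) \<le> ?V x - \<alpha>1 (norm x)" using dec[OF x] by simp
  next
    fix x assume x: "x \<in> Xf"
    show "?V x \<le> \<alpha>2 (norm x)" unfolding Vfun_def
      using Nmin_0[OF x A2(3), of f h U Y] VN_0[OF x A2(3), of f h l Vf U Y] va x by simp
  qed
qed

end
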